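(* Let $\Phi$ be a Leonard system in $\mathcal A$ with eigenvalue sequence $\theta_0,\dots,\theta_d$, and let $\nu$ and $c_1,\dots,c_d$ be as defined below. Then $$(\theta_0-\theta_1)(\theta_0-\theta_2)\cdots(\theta_0-\theta_d)=\nu\,c_1c_2\cdots c_d.$$
   Context: Let $\mathbb K$ be a field, $d\ge 0$ an integer, and $\mathcal A$ a $\mathbb K$-algebra isomorphic to $\mathrm{Mat}_{d+1}(\mathbb K)$, with identity $I$ and trace $\mathrm{tr}$. An element $A\in\mathcal A$ is multiplicity-free if it has $d+1$ mutually distinct eigenvalues in $\mathbb K$; if $\theta_0,\dots,\theta_d$ is an ordering of them, the primitive idempotent of $A$ associated with $\theta_i$ is $E_i=\prod_{j\ne i}(A-\theta_jI)/(\theta_i-\theta_j)$. A Leonard system in $\mathcal A$ is a sequence $\Phi=(A;A^*;\{E_i\}_{i=0}^d;\{E^*_i\}_{i=0}^d)$ such that: (i) $A,A^*$ are multiplicity-free; (ii) $E_0,\dots,E_d$ is an ordering of the primitive idempotents of $A$; (iii) $E^*_0,\dots,E^*_d$ is an ordering of those of $A^*$; (iv) $E_iA^*E_j=0$ if $|i-j|>1$ and $\ne0$ if $|i-j|=1$ $(0\le i,j\le d)$; (v) $E^*_iAE^*_j=0$ if $|i-j|>1$ and $\neq0$ if $|i-j|=1$ $(0\le i,j\le d)$. $\theta_i$ denotes the eigenvalue of $A$ associated with $E_i$ (eigenvalue sequence). One has $\mathrm{tr}(E_0E^*_0)\ne0$, and $\nu$ is defined by $\nu=\mathrm{tr}(E_0E^*_0)^{-1}$.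 Let $V$ be an irreducible $\mathcal A$-module and $u$ a nonzero vector in $E_0V$; then $E^*_0u,\dots,E^*_du$ is a basis of $V$ (a $\Phi$-standard basis). The matrix representing $A$ with respect to this basis is tridiagonal and does not depend on the choice of $V$ and $u$; for $1\le i\le d$, $c_i$ denotes its $(i,i-1)$ entry (rows and columns indexed $0,\dots,d$). *)

theory Defs
  imports "Jordan_Normal_Form.Char_Poly"
begin

text \<open>We realise the algebra A as the concrete matrix algebra of n x n matrices
  over a field, n = d + 1.\<close>

definition mat_tr :: "'a::comm_ring_1 mat \<Rightarrow> 'a" where
  "mat_tr M = (\<Sum>i<dim_row M. M $$ (i, i))"

definition mult_free :: "nat \<Rightarrow> 'a::field mat \<Rightarrow> bool" where
  "mult_free n M \<longleftrightarrow> M \<in> carrier_mat n n \<and> finite {k. eigenvalue M k}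
     \<and> card {k. eigenvalue M k} = n"

definition eig_ordering :: "nat \<Rightarrow> 'a::field mat \<Rightarrow> (nat \<Rightarrow> 'a) \<Rightarrow> bool" where
  "eig_ordering n M th \<longleftrightarrow> inj_on th {..<n} \<and> th ` {..<n} = {k. eigenvalue M k}"

definition prim_idem :: "nat \<Rightarrow> 'a::field mat \<Rightarrow> (nat \<Rightarrow> 'a) \<Rightarrow> nat \<Rightarrow> 'a mat" where
  "prim_idem n M th i =
     foldr (\<lambda>j P. ((1 / (th i - th j)) \<cdot>\<^sub>m (M - th j \<cdot>\<^sub>m 1\<^sub>m n)) * P)
       (filter (\<lambda>j. j \<noteq> i) [0..<n]) (1\<^sub>m n)"

definition idem_ordering :: "nat \<Rightarrow> 'a::field mat \<Rightarrow> (nat \<Rightarrow> 'a mat) \<Rightarrow> bool" where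
  "idem_ordering n M E \<longleftrightarrow>
     (\<exists>th. eig_ordering n M th \<and> (\<forall>i<n. E i = prim_idem n M th i))"

definition tridiag_cond :: "nat \<Rightarrow> (nat \<Rightarrow> 'a::field mat) \<Rightarrow> 'a mat \<Rightarrow> bool" where
  "tridiag_cond n E X \<longleftrightarrow> (\<forall>i<n. \<forall>j<n.
      (\<bar>int i - int j\<bar> > 1 \<longrightarrow> E i * X * E j = 0\<^sub>m n n) \<and>
      (\<bar>int i - int j\<bar> = 1 \<longrightarrow> E i * X * E j \<noteq> 0\<^sub>m n n))"

definition leonard_system ::
  "nat \<Rightarrow> 'a::field mat \<Rightarrow> 'a mat \<Rightarrow> (nat \<Rightarrow> 'a mat) \<Rightarrow> (nat \<Rightarrow> 'a mat) \<Rightarrow> bool" where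
  "leonard_system d A As E Es \<longleftrightarrow>
     mult_free (d+1) A \<and> mult_free (d+1) As \<and>
     idem_ordering (d+1) A E \<and> idem_ordering (d+1) As Es \<and>
     tridiag_cond (d+1) E As \<and> tridiag_cond (d+1) Es A"

definition represents_wrt :: "nat \<Rightarrow> 'a::field mat \<Rightarrow> (nat \<Rightarrow> 'a vec) \<Rightarrow> 'a mat \<Rightarrow> bool" where
  "represents_wrt n M vs B \<longleftrightarrow> B \<in> carrier_mat n n \<and>
     (\<forall>j<n. \<forall>k<n. (M *\<^sub>v vs j) $ k = (\<Sum>i<n. B $$ (i, j) * vs i $ k))"

end

theory Submission
  imports Defs
begin

lemma mat_vec_index:
  assumes "X \<in> carrier_mat n m" "z \<in> carrier_vec m" "r < n"
  shows "(X *\<^sub>v z) $ r = (\<Sum>c = 0..<m. X $$ (r, c) * z $ c)"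
  using assms by (auto simp: scalar_prod_def)

lemma smult_vec_zero_scalar:
  assumes v: "v \<in> carrier_vec n" "v \<noteq> 0\<^sub>v n" and c: "(c::'a::field) \<cdot>\<^sub>v v = 0\<^sub>v n"
  shows "c = 0"
proof -
  obtain i where i: "i < n" "v $ i \<noteq> 0"
  proof (rule ccontr)
    assume "\<not> thesis"
    then have "\<forall>i<n. v $ i = 0" using that by blast
    then have "v = 0\<^sub>v n" using v by (intro eq_vecI) auto
    then show False using v by simp
  qed
  have "(c \<cdot>\<^sub>v v) $ i = c * v $ i" using i v by simp
  then show ?thesis using c i by simp
qed

lemma mvec3:
  assumes "A \<in> carrier_mat n n" "B \<in> carrier_mat n n" "C \<in> carrier_mat n n" "y \<in> carrier_vec n"
  shows "(A * B * C) *\<^sub>v y = A *\<^sub>v (B *\<^sub>v (C *\<^sub>v y))"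
proof -
  have "(A * B * C) *\<^sub>v y = (A * B) *\<^sub>v (C *\<^sub>v y)"
    by (rule assoc_mult_mat_vec[OF mult_carrier_mat[OF assms(1,2)] assms(3,4)])
  also have "\<dots> = A *\<^sub>v (B *\<^sub>v (C *\<^sub>v y))"
    by (rule assoc_mult_mat_vec[OF assms(1,2)]) (use assms in auto)
  finally show ?thesis .
qed

lemma col3:
  assumes "A \<in> carrier_mat n n" "B \<in> carrier_mat n n" "C \<in> carrier_mat n n" "j < n"
  shows "col (A * B * C) j = A *\<^sub>v (B *\<^sub>v col C j)"
proof -
  have "col (A * B * C) j = (A * B) *\<^sub>v col C j"
    by (rule col_mult2[OF mult_carrier_mat[OF assms(1,2)] assms(3,4)])
  also have "\<dots> = A *\<^sub>v (B *\<^sub>v col C j)"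
    by (rule assoc_mult_mat_vec[OF assms(1,2)]) (use assms in auto)
  finally show ?thesis .
qed

lemma mat_unit_entry:
  fixes Z :: "'a::semiring_1 mat"
  assumes "Z \<in> carrier_mat n m" "r < n" "c < m"
  shows "(Z *\<^sub>v unit_vec m c) $ r = Z $$ (r, c)"
proof -
  have "(Z *\<^sub>v unit_vec m c) $ r = row Z r \<bullet> unit_vec m c" using assms by simp
  also have "\<dots> = row Z r $ c" using assms(3) by (rule scalar_prod_right_unit)
  also have "\<dots> = Z $$ (r, c)" using assms by simp
  finally show ?thesis .
qed

lemma smult_mat_vec:
  assumes "(A::'a::field mat) \<in> carrier_mat nr nc" "v \<in> carrier_vec nc"
  shows "(k \<cdot>\<^sub>m A) *\<^sub>v v = k \<cdot>\<^sub>v (A *\<^sub>v v)"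
  using assms by (intro eq_vecI) (auto simp: scalar_prod_def sum_distrib_left ac_simps)

definition fac :: "nat \<Rightarrow> 'a::field mat \<Rightarrow> (nat \<Rightarrow> 'a) \<Rightarrow> nat \<Rightarrow> nat \<Rightarrow> 'a mat" where
  "fac n M th i j = (1 / (th i - th j)) \<cdot>\<^sub>m (M - th j \<cdot>\<^sub>m 1\<^sub>m n)"

lemma fac_carrier: "M \<in> carrier_mat n n \<Longrightarrow> fac n M th i j \<in> carrier_mat n n"
  by (auto simp: fac_def)

lemma fac_vec:
  assumes M: "(M::'a::field mat) \<in> carrier_mat n n" and y: "y \<in> carrier_vec n"
  shows "fac n M th i j *\<^sub>v y = (1 / (th i - th j)) \<cdot>\<^sub>v (M *\<^sub>v y - th j \<cdot>\<^sub>v y)"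
proof -
  have "fac n M th i j *\<^sub>v y = (1 / (th i - th j)) \<cdot>\<^sub>v ((M - th j \<cdot>\<^sub>m 1\<^sub>m n) *\<^sub>v y)"
    unfolding fac_def using M y by (intro smult_mat_vec) auto
  also have "(M - th j \<cdot>\<^sub>m 1\<^sub>m n) *\<^sub>v y = M *\<^sub>v y - (th j \<cdot>\<^sub>m 1\<^sub>m n) *\<^sub>v y"
    using M y by (intro minus_mult_distrib_mat_vec) auto
  also have "(th j \<cdot>\<^sub>m 1\<^sub>m n) *\<^sub>v y = th j \<cdot>\<^sub>v y"
    using y by (subst smult_mat_vec[of _ n n]) auto
  finally show ?thesis .
qed

lemma prim_idem_foldr: "prim_idem n M th i = foldr (\<lambda>j P. fac n M th i j * P) (filter (\<lambda>j. j \<noteq> i) [0..<n]) (1\<^sub>m n)"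
  unfolding prim_idem_def fac_def by simp

lemma foldr_fac_carrier: "M \<in> carrier_mat n n \<Longrightarrow> foldr (\<lambda>j P. fac n M th i j * P) L (1\<^sub>m n) \<in> carrier_mat n n"
  by (induction L) (auto intro!: mult_carrier_mat fac_carrier)

lemma foldr_fac_eig:
  assumes M: "(M::'a::field mat) \<in> carrier_mat n n" and x: "x \<in> carrier_vec n"
    and ev: "M *\<^sub>v x = t \<cdot>\<^sub>v x"
  shows "foldr (\<lambda>j P. fac n M th i j * P) L (1\<^sub>m n) *\<^sub>v x
     = prod_list (map (\<lambda>j. (t - th j) / (th i - th j)) L) \<cdot>\<^sub>v x"
proof (induction L)
  case Nil then show ?case using x by simp
next
  case (Cons j L)
  have "foldr (\<lambda>j P. fac n M th i j * P) (j # L) (1\<^sub>m n) *\<^sub>v x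
      = fac n M th i j *\<^sub>v (foldr (\<lambda>j P. fac n M th i j * P) L (1\<^sub>m n) *\<^sub>v x)"
    by (simp, rule assoc_mult_mat_vec[OF fac_carrier[OF M] foldr_fac_carrier[OF M] x])
  also have "\<dots> = fac n M th i j *\<^sub>v (prod_list (map (\<lambda>j. (t - th j) / (th i - th j)) L) \<cdot>\<^sub>v x)"
    using Cons by simp
  also have "\<dots> = prod_list (map (\<lambda>j. (t - th j) / (th i - th j)) (j # L)) \<cdot>\<^sub>v x"
    using M x ev by (intro eq_vecI) (auto simp: fac_vec mult_mat_vec algebra_simps add_divide_distrib[symmetric])
  finally show ?case .
qed

lemma prim_idem_carrier: "M \<in> carrier_mat n n \<Longrightarrow> prim_idem n M th k \<in> carrier_mat n n"
  unfolding prim_idem_foldr by (rule foldr_fac_carrier)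

lemma prim_idem_eig:
  assumes M: "(M::'a::field mat) \<in> carrier_mat n n" and inj: "inj_on th {..<n}"
    and i: "i < n" and k: "k < n" and x: "x \<in> carrier_vec n" and ev: "M *\<^sub>v x = th i \<cdot>\<^sub>v x"
  shows "prim_idem n M th k *\<^sub>v x = (if i = k then x else 0\<^sub>v n)"
proof -
  let ?L = "filter (\<lambda>j. j \<noteq> k) [0..<n]"
  let ?g = "\<lambda>j. (th i - th j) / (th k - th j)"
  have eq: "prim_idem n M th k *\<^sub>v x = prod_list (map ?g ?L) \<cdot>\<^sub>v x"
    unfolding prim_idem_foldr by (rule foldr_fac_eig[OF M x ev])
  have dist: "distinct ?L" by simp
  have setL: "set ?L = {..<n} - {k}" by auto
  show ?thesis
  proof (cases "i = k")
    case True
    have "prod_list (map ?g ?L) = prod ?g (set ?L)"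
      by (rule prod.distinct_set_conv_list[OF dist, symmetric])
    also have "\<dots> = 1"
    proof (rule prod.neutral, intro ballI)
      fix j assume "j \<in> set ?L"
      then have "j < n" "j \<noteq> k" by auto
      then have "th k \<noteq> th j" using inj k unfolding inj_on_def by auto
      then show "?g j = 1" using True by simp
    qed
    finally show ?thesis using eq True x by simp
  next
    case False
    have "i \<in> set ?L" using False i by simp
    then have "?g i \<in> set (map ?g ?L)" by (rule imageI[of i "set ?L" ?g, unfolded set_map[symmetric]])
    then have "0 \<in> set (map ?g ?L)" by simp
    then have z: "prod_list (map ?g ?L) = 0" by (simp only: prod_list_zero_iff)
    show ?thesis unfolding eq z using False x by (intro eq_vecI) auto
  qed
qed

lemma diag_struct:
  fixes M :: "'a::field mat"
  assumes M: "M \<in> carrier_mat n n" and inj: "inj_on th {..<n}"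
    and ev: "\<forall>i<n. eigenvalue M (th i)"
  obtains P Q where "P \<in> carrier_mat n n" "Q \<in> carrier_mat n n" "P * Q = 1\<^sub>m n" "Q * P = 1\<^sub>m n"
    "\<forall>k<n. M *\<^sub>v col P k = th k \<cdot>\<^sub>v col P k"
    "\<forall>k<n. \<forall>y\<in>carrier_vec n. prim_idem n M th k *\<^sub>v y = (Q *\<^sub>v y) $ k \<cdot>\<^sub>v col P k"
proof -
  define p where "p k = (SOME v. eigenvector M v (th k))" for k
  have p: "p k \<in> carrier_vec n \<and> p k \<noteq> 0\<^sub>v n \<and> M *\<^sub>v p k = th k \<cdot>\<^sub>v p k" if "k < n" for k
  proof -
    have "\<exists>v. eigenvector M v (th k)" using ev that unfolding eigenvalue_def by auto
    then have "eigenvector M (p k) (th k)" unfolding p_def by (rule someI_ex)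
    then show ?thesis using M unfolding eigenvector_def by auto
  qed
  define P where "P = mat n n (\<lambda>(r,c). p c $ r)"
  have Pc: "P \<in> carrier_mat n n" unfolding P_def by auto
  have colP: "col P k = p k" if "k < n" for k
    using that p[OF that] unfolding P_def by (intro eq_vecI) auto
  have EP: "prim_idem n M th k *\<^sub>v (P *\<^sub>v z) = z $ k \<cdot>\<^sub>v p k" if k: "k < n" and z: "z \<in> carrier_vec n" for k z
  proof -
    let ?E = "prim_idem n M th k"
    have Ec: "?E \<in> carrier_mat n n" by (rule prim_idem_carrier[OF M])
    have ent: "(?E * P) $$ (r, c) = (if c = k then p k $ r else 0)" if "r < n" "c < n" for r c
    proof -
      have "(?E * P) $$ (r, c) = col (?E * P) c $ r" using that Ec Pc by simp
      also have "\<dots> = (?E *\<^sub>v p c) $ r" using that Ec Pc colP by simp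
      also have "\<dots> = (if c = k then p k $ r else 0)"
        using prim_idem_eig[OF M inj that(2) k, of "p c"] p[OF that(2)] that by auto
      finally show ?thesis .
    qed
    have "?E *\<^sub>v (P *\<^sub>v z) = (?E * P) *\<^sub>v z" using Ec Pc z by simp
    also have "\<dots> = z $ k \<cdot>\<^sub>v p k"
    proof (rule eq_vecI)
      fix r assume r: "r < dim_vec (z $ k \<cdot>\<^sub>v p k)"
      then have r': "r < n" using p[OF k] by auto
      have "((?E * P) *\<^sub>v z) $ r = (\<Sum>c = 0..<n. (?E * P) $$ (r, c) * z $ c)"
        by (rule mat_vec_index[OF mult_carrier_mat[OF Ec Pc] z r'])
      also have "\<dots> = (\<Sum>c = 0..<n. (if c = k then p k $ r * z $ k else 0))"
        by (rule sum.cong) (use r' ent in auto)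
      also have "\<dots> = p k $ r * z $ k" using k by simp
      finally show "((?E * P) *\<^sub>v z) $ r = (z $ k \<cdot>\<^sub>v p k) $ r" using r' p[OF k] by (auto simp: mult.commute)
    qed (use Ec Pc p[OF k] in auto)
    finally show ?thesis .
  qed
  have "det P \<noteq> 0"
  proof
    assume "det P = 0"
    then obtain z where z: "z \<in> carrier_vec n" "z \<noteq> 0\<^sub>v n" "P *\<^sub>v z = 0\<^sub>v n"
      using det_0_iff_vec_prod_zero_field[OF Pc] by auto
    have "z $ k = 0" if k: "k < n" for k
    proof -
      have "z $ k \<cdot>\<^sub>v p k = prim_idem n M th k *\<^sub>v 0\<^sub>v n" using EP[OF k z(1), unfolded z(3)] by simp
      also have "\<dots> = 0\<^sub>v n" using prim_idem_carrier[OF M, of th k] by (intro eq_vecI) (auto simp: scalar_prod_def)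
      finally have "z $ k \<cdot>\<^sub>v p k = 0\<^sub>v n" .
      then show ?thesis using p[OF k]
        by (intro smult_vec_zero_scalar[of "p k" n]) auto
    qed
    then have "z = 0\<^sub>v n" using z by (intro eq_vecI) auto
    then show False using z by simp
  qed
  then have "P \<in> Units (ring_mat TYPE('a) n ())" by (rule det_non_zero_imp_unit[OF Pc])
  then obtain Q where Q: "Q \<in> carrier_mat n n" "P * Q = 1\<^sub>m n" "Q * P = 1\<^sub>m n"
    unfolding Units_def ring_mat_def by auto
  show ?thesis
  proof (rule that[OF Pc Q])
    show "\<forall>k<n. M *\<^sub>v col P k = th k \<cdot>\<^sub>v col P k" using colP p by auto
    show "\<forall>k<n. \<forall>y\<in>carrier_vec n. prim_idem n M th k *\<^sub>v y = (Q *\<^sub>v y) $ k \<cdot>\<^sub>v col P k"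
    proof (intro allI impI ballI)
      fix k and y :: "'a vec" assume k: "k < n" and y: "y \<in> carrier_vec n"
      have "y = P *\<^sub>v (Q *\<^sub>v y)" using Pc Q y by (simp flip: assoc_mult_mat_vec)
      then have "prim_idem n M th k *\<^sub>v y = prim_idem n M th k *\<^sub>v (P *\<^sub>v (Q *\<^sub>v y))" by simp
      also have "\<dots> = (Q *\<^sub>v y) $ k \<cdot>\<^sub>v p k" using EP k Q y by simp
      finally show "prim_idem n M th k *\<^sub>v y = (Q *\<^sub>v y) $ k \<cdot>\<^sub>v col P k" using colP k by simp
    qed
  qed
qed

definition dstruct :: "nat \<Rightarrow> 'a::field mat \<Rightarrow> (nat \<Rightarrow> 'a) \<Rightarrow> 'a mat \<Rightarrow> 'a mat \<Rightarrow> bool" where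
  "dstruct n M th P Q \<longleftrightarrow> M \<in> carrier_mat n n \<and> P \<in> carrier_mat n n \<and> Q \<in> carrier_mat n n \<and>
     P * Q = 1\<^sub>m n \<and> Q * P = 1\<^sub>m n \<and> (\<forall>k<n. M *\<^sub>v col P k = th k \<cdot>\<^sub>v col P k) \<and>
     (\<forall>k<n. \<forall>y\<in>carrier_vec n. prim_idem n M th k *\<^sub>v y = (Q *\<^sub>v y) $ k \<cdot>\<^sub>v col P k)"

lemma dstruct_exists:
  fixes M :: "'a::field mat"
  assumes M: "M \<in> carrier_mat n n" and inj: "inj_on th {..<n}"
    and ev: "\<forall>i<n. eigenvalue M (th i)"
  obtains P Q where "dstruct n M th P Q"
  using diag_struct[OF M inj ev] M unfolding dstruct_def by metis

context
  fixes n :: nat and M :: "'a::field mat" and th P Q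
  assumes D: "dstruct n M th P Q"
begin

lemma D_M: "M \<in> carrier_mat n n" and D_P: "P \<in> carrier_mat n n" and D_Q: "Q \<in> carrier_mat n n"
  and D_PQ: "P * Q = 1\<^sub>m n" and D_QP: "Q * P = 1\<^sub>m n"
  and D_eig: "k < n \<Longrightarrow> M *\<^sub>v col P k = th k \<cdot>\<^sub>v col P k"
  and D_E: "k < n \<Longrightarrow> y \<in> carrier_vec n \<Longrightarrow> prim_idem n M th k *\<^sub>v y = (Q *\<^sub>v y) $ k \<cdot>\<^sub>v col P k"
  using D unfolding dstruct_def by auto

lemma D_colP_carrier: "col P k \<in> carrier_vec n"
  using D_P by (simp add: carrier_vecI)

lemma D_QcolP: "k < n \<Longrightarrow> Q *\<^sub>v col P k = unit_vec n k"
proof -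
  assume k: "k < n"
  have "Q *\<^sub>v col P k = col (Q * P) k" by (rule col_mult2[OF D_Q D_P k, symmetric])
  also have "\<dots> = unit_vec n k" using D_QP k by simp
  finally show ?thesis .
qed

lemma D_colP_nz: "k < n \<Longrightarrow> col P k \<noteq> 0\<^sub>v n"
proof
  assume k: "k < n" and z: "col P k = 0\<^sub>v n"
  have "Q *\<^sub>v col P k = 0\<^sub>v n" unfolding z using D_Q by (intro eq_vecI) (auto simp: scalar_prod_def)
  then have "(unit_vec n k :: 'a vec) = 0\<^sub>v n" using D_QcolP[OF k] by simp
  then have "(unit_vec n k :: 'a vec) $ k = (0\<^sub>v n :: 'a vec) $ k" by simp
  then show False using k by simp
qed

lemma D_PQv: "y \<in> carrier_vec n \<Longrightarrow> P *\<^sub>v (Q *\<^sub>v y) = y"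
  using D_P D_Q D_PQ by (simp flip: assoc_mult_mat_vec)

lemma D_QE: "k < n \<Longrightarrow> y \<in> carrier_vec n \<Longrightarrow>
   Q *\<^sub>v (prim_idem n M th k *\<^sub>v y) = (Q *\<^sub>v y) $ k \<cdot>\<^sub>v unit_vec n k"
  using D_E D_QcolP D_Q D_colP_carrier by (simp add: mult_mat_vec)

lemma D_coord: "X \<in> carrier_mat n n \<Longrightarrow> y \<in> carrier_vec n \<Longrightarrow>
   Q *\<^sub>v (X *\<^sub>v y) = (Q * X * P) *\<^sub>v (Q *\<^sub>v y)"
proof -
  assume X: "X \<in> carrier_mat n n" and y: "y \<in> carrier_vec n"
  have "Q *\<^sub>v (X *\<^sub>v y) = Q *\<^sub>v (X *\<^sub>v (P *\<^sub>v (Q *\<^sub>v y)))" using D_PQv[OF y] by simp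
  also have "\<dots> = (Q * X * P) *\<^sub>v (Q *\<^sub>v y)"
    by (rule mvec3[OF D_Q X D_P, symmetric]) (use D_Q y in auto)
  finally show ?thesis .
qed

lemma D_entry: "X \<in> carrier_mat n n \<Longrightarrow> i < n \<Longrightarrow> j < n \<Longrightarrow>
   (Q * X * P) $$ (i, j) = (Q *\<^sub>v (X *\<^sub>v col P j)) $ i"
proof -
  assume X: "X \<in> carrier_mat n n" and i: "i < n" and j: "j < n"
  have "(Q * X * P) $$ (i, j) = col (Q * X * P) j $ i" using X i j D_P D_Q by simp
  also have "col (Q * X * P) j = Q *\<^sub>v (X *\<^sub>v col P j)"
    by (rule col3[OF D_Q X D_P j])
  finally show ?thesis .
qed

lemma D_diag: "y \<in> carrier_vec n \<Longrightarrow> i < n \<Longrightarrow> (Q *\<^sub>v (M *\<^sub>v y)) $ i = th i * (Q *\<^sub>v y) $ i"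
proof -
  assume y: "y \<in> carrier_vec n" and i: "i < n"
  have ent: "(Q * M * P) $$ (i, j) = (if j = i then th i else 0)" if j: "j < n" for j
    using D_entry[OF D_M i j] D_eig[OF j] D_QcolP[OF j] D_Q i j D_colP_carrier
    by (auto simp: mult_mat_vec)
  have "(Q *\<^sub>v (M *\<^sub>v y)) $ i = ((Q * M * P) *\<^sub>v (Q *\<^sub>v y)) $ i" using D_coord[OF D_M y] by simp
  also have "\<dots> = (\<Sum>c = 0..<n. (Q * M * P) $$ (i, c) * (Q *\<^sub>v y) $ c)"
    by (rule mat_vec_index) (use D_M D_P D_Q y i in auto)
  also have "\<dots> = (\<Sum>c = 0..<n. (if c = i then th i * (Q *\<^sub>v y) $ i else 0))"
    by (rule sum.cong) (auto simp: ent)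
  also have "\<dots> = th i * (Q *\<^sub>v y) $ i" using i by simp
  finally show ?thesis .
qed

lemma D_tri: "X \<in> carrier_mat n n \<Longrightarrow> i < n \<Longrightarrow> j < n \<Longrightarrow>
   (prim_idem n M th i * X * prim_idem n M th j = 0\<^sub>m n n) \<longleftrightarrow> (Q * X * P) $$ (i, j) = 0"
proof -
  assume X: "X \<in> carrier_mat n n" and i: "i < n" and j: "j < n"
  let ?Ei = "prim_idem n M th i" and ?Ej = "prim_idem n M th j"
  let ?T = "(Q * X * P) $$ (i, j)"
  have Eic: "?Ei \<in> carrier_mat n n" and Ejc: "?Ej \<in> carrier_mat n n"
    using prim_idem_carrier[OF D_M] by auto
  have Zc: "?Ei * X * ?Ej \<in> carrier_mat n n" using Eic Ejc X by auto
  have act: "(?Ei * X * ?Ej) *\<^sub>v y = ((Q *\<^sub>v y) $ j * ?T) \<cdot>\<^sub>v col P i" if y: "y \<in> carrier_vec n" for y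
  proof -
    have "(?Ei * X * ?Ej) *\<^sub>v y = ?Ei *\<^sub>v (X *\<^sub>v (?Ej *\<^sub>v y))" by (rule mvec3[OF Eic X Ejc y])
    also have "?Ej *\<^sub>v y = (Q *\<^sub>v y) $ j \<cdot>\<^sub>v col P j" using D_E[OF j y] .
    also have "X *\<^sub>v ((Q *\<^sub>v y) $ j \<cdot>\<^sub>v col P j) = (Q *\<^sub>v y) $ j \<cdot>\<^sub>v (X *\<^sub>v col P j)"
      using X D_colP_carrier by (simp add: mult_mat_vec)
    also have "?Ei *\<^sub>v \<dots> = (Q *\<^sub>v y) $ j \<cdot>\<^sub>v (?Ei *\<^sub>v (X *\<^sub>v col P j))"
      using X Eic D_colP_carrier by (simp add: mult_mat_vec)
    also have "?Ei *\<^sub>v (X *\<^sub>v col P j) = ?T \<cdot>\<^sub>v col P i"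
      using D_E[OF i, of "X *\<^sub>v col P j"] D_entry[OF X i j] X D_colP_carrier by simp
    finally show ?thesis using D_colP_carrier by (simp add: smult_smult_assoc)
  qed
  show ?thesis
  proof
    assume z: "?Ei * X * ?Ej = 0\<^sub>m n n"
    have z0: "(?Ei * X * ?Ej) *\<^sub>v col P j = 0\<^sub>v n"
      unfolding z using D_P by (intro eq_vecI) (auto simp: scalar_prod_def)
    have "((Q *\<^sub>v col P j) $ j * ?T) \<cdot>\<^sub>v col P i = 0\<^sub>v n"
      using act[OF D_colP_carrier] z0 by simp
    then have "?T \<cdot>\<^sub>v col P i = 0\<^sub>v n" using D_QcolP[OF j] j by simp
    then show "?T = 0" using smult_vec_zero_scalar[OF D_colP_carrier D_colP_nz[OF i]] by auto
  next
    assume T: "?T = 0"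
    show "?Ei * X * ?Ej = 0\<^sub>m n n"
    proof (rule eq_matI)
      fix r c assume r: "r < dim_row (0\<^sub>m n n :: 'a mat)" and c: "c < dim_col (0\<^sub>m n n :: 'a mat)"
      have "(?Ei * X * ?Ej) $$ (r, c) = ((?Ei * X * ?Ej) *\<^sub>v unit_vec n c) $ r"
        by (rule mat_unit_entry[OF Zc, symmetric]) (use r c in auto)
      also have "\<dots> = 0" unfolding act[OF unit_vec_carrier] T using r D_P by simp
      finally show "(?Ei * X * ?Ej) $$ (r, c) = 0\<^sub>m n n $$ (r, c)" using r c by simp
    qed (use Zc in auto)
  qed
qed

end


lemma hess_step:
  fixes T :: "'a::field mat"
  assumes T: "T \<in> carrier_mat n n" and low: "\<forall>i<n. \<forall>j<n. j + 1 < i \<longrightarrow> T $$ (i, j) = 0"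
    and x: "x \<in> carrier_vec n" and xz: "\<forall>i<n. m < i \<longrightarrow> x $ i = 0" and m: "m + 1 < n"
  shows "\<forall>i<n. m + 1 < i \<longrightarrow> (T *\<^sub>v x) $ i = 0"
    and "(T *\<^sub>v x) $ (m + 1) = T $$ (m + 1, m) * x $ m"
proof -
  show "\<forall>i<n. m + 1 < i \<longrightarrow> (T *\<^sub>v x) $ i = 0"
  proof (intro allI impI)
    fix i assume i: "i < n" "m + 1 < i"
    have "(T *\<^sub>v x) $ i = (\<Sum>c = 0..<n. T $$ (i, c) * x $ c)" by (rule mat_vec_index[OF T x i(1)])
    also have "\<dots> = 0"
    proof (rule sum.neutral, intro ballI)
      fix c assume c: "c \<in> {0..<n}"
      show "T $$ (i, c) * x $ c = 0"
      proof (cases "c + 1 < i")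
        case True then show ?thesis using low i c by auto
      next
        case False then show ?thesis using xz i c by auto
      qed
    qed
    finally show "(T *\<^sub>v x) $ i = 0" .
  qed
  have "(T *\<^sub>v x) $ (m + 1) = (\<Sum>c = 0..<n. T $$ (m + 1, c) * x $ c)" by (rule mat_vec_index[OF T x m])
  also have "\<dots> = (\<Sum>c = 0..<n. if c = m then T $$ (m + 1, m) * x $ m else 0)"
  proof (rule sum.cong[OF refl])
    fix c assume c: "c \<in> {0..<n}"
    show "T $$ (m + 1, c) * x $ c = (if c = m then T $$ (m + 1, m) * x $ m else 0)"
    proof (cases "c < m")
      case True then show ?thesis using low m c by auto
    next
      case False then show ?thesis using xz m c by auto
    qed
  qed
  also have "\<dots> = T $$ (m + 1, m) * x $ m" using m by simp
  finally show "(T *\<^sub>v x) $ (m + 1) = T $$ (m + 1, m) * x $ m" .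
qed


theorem theorem11p5:
  fixes d :: nat and A As :: "'a::field mat" and E Es :: "nat \<Rightarrow> 'a mat"
    and th :: "nat \<Rightarrow> 'a" and u :: "'a vec" and B :: "'a mat"
  assumes LS: "leonard_system d A As E Es"
    and th: "eig_ordering (d+1) A th" "\<forall>i\<le>d. E i = prim_idem (d+1) A th i"
    and u: "u \<in> carrier_vec (d+1)" "u \<noteq> 0\<^sub>v (d+1)"
      "\<exists>w \<in> carrier_vec (d+1). u = E 0 *\<^sub>v w"
    and B: "represents_wrt (d+1) A (\<lambda>i. Es i *\<^sub>v u) B"
  shows "(\<Prod>i\<in>{1..d}. th 0 - th i)
           = inverse (mat_tr (E 0 * Es 0)) * (\<Prod>i\<in>{1..d}. B $$ (i, i - 1))"
proof -
  define n where "n = d + 1"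
  have nd: "d + 1 = n" "Suc d = n" using n_def by auto
  note LS' = LS[unfolded leonard_system_def nd]
  have Ac: "A \<in> carrier_mat n n" and Asc: "As \<in> carrier_mat n n"
    using LS' unfolding mult_free_def by auto
  obtain ths where ths: "eig_ordering n As ths" "\<forall>i<n. Es i = prim_idem n As ths i"
    using LS' unfolding idem_ordering_def by auto
  have thE: "\<forall>i<n. E i = prim_idem n A th i" using th(2) n_def by auto
  have triE: "tridiag_cond n E As" and triEs: "tridiag_cond n Es A" using LS' by auto
  have inj: "inj_on th {..<n}" and evs: "\<forall>i<n. eigenvalue A (th i)"
    using th(1) unfolding nd eig_ordering_def by auto
  have injs: "inj_on ths {..<n}" and evss: "\<forall>i<n. eigenvalue As (ths i)"
    using ths(1) unfolding eig_ordering_def by auto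
  obtain P Q where D: "dstruct n A th P Q" using dstruct_exists[OF Ac inj evs] by blast
  obtain Ps Qs where Ds: "dstruct n As ths Ps Qs" using dstruct_exists[OF Asc injs evss] by blast
  note Pc = D_P[OF D] and Qc = D_Q[OF D] and Psc = D_P[OF Ds] and Qsc = D_Q[OF Ds]
  define T where "T = Qs * A * Ps"
  define Ts where "Ts = Q * As * P"
  have Tc: "T \<in> carrier_mat n n" and Tsc: "Ts \<in> carrier_mat n n"
    unfolding T_def Ts_def using Pc Qc Psc Qsc Ac Asc by auto
  have Tlow: "\<forall>i<n. \<forall>j<n. j + 1 < i \<longrightarrow> T $$ (i, j) = 0"
  proof (intro allI impI)
    fix i j assume ij: "i < n" "j < n" "j + 1 < i"
    then have "Es i * A * Es j = 0\<^sub>m n n" using triEs unfolding tridiag_cond_def by auto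
    then show "T $$ (i, j) = 0" using D_tri[OF Ds Ac ij(1,2)] ths(2) ij unfolding T_def by auto
  qed
  have Tsub: "\<forall>k. 1 \<le> k \<longrightarrow> k \<le> d \<longrightarrow> T $$ (k, k - 1) \<noteq> 0"
  proof (intro allI impI)
    fix k assume k: "1 \<le> k" "k \<le> d"
    then have kn: "k < n" "k - 1 < n" using n_def by auto
    then have "Es k * A * Es (k - 1) \<noteq> 0\<^sub>m n n" using triEs k unfolding tridiag_cond_def by auto
    then show "T $$ (k, k - 1) \<noteq> 0" using D_tri[OF Ds Ac kn] ths(2) kn unfolding T_def by auto
  qed
  have Tslow: "\<forall>i<n. \<forall>j<n. j + 1 < i \<longrightarrow> Ts $$ (i, j) = 0"
  proof (intro allI impI)
    fix i j assume ij: "i < n" "j < n" "j + 1 < i"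
    then have "E i * As * E j = 0\<^sub>m n n" using triE unfolding tridiag_cond_def by auto
    then show "Ts $$ (i, j) = 0" using D_tri[OF D Asc ij(1,2)] thE ij unfolding Ts_def by auto
  qed
  have Tssub: "\<forall>k. 1 \<le> k \<longrightarrow> k \<le> d \<longrightarrow> Ts $$ (k, k - 1) \<noteq> 0"
  proof (intro allI impI)
    fix k assume k: "1 \<le> k" "k \<le> d"
    then have kn: "k < n" "k - 1 < n" using n_def by auto
    then have "E k * As * E (k - 1) \<noteq> 0\<^sub>m n n" using triE k unfolding tridiag_cond_def by auto
    then show "Ts $$ (k, k - 1) \<noteq> 0" using D_tri[OF D Asc kn] thE kn unfolding Ts_def by auto
  qed
  obtain w where w: "w \<in> carrier_vec n" "u = E 0 *\<^sub>v w" using u(3) nd by auto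
  define \<alpha> where "\<alpha> = (Q *\<^sub>v w) $ 0"
  have n0: "0 < n" using n_def by simp
  have uc: "u \<in> carrier_vec n" using u(1) nd by simp
  have ualpha: "u = \<alpha> \<cdot>\<^sub>v col P 0" using w D_E[OF D n0 w(1)] thE n0 unfolding \<alpha>_def by simp
  have anz: "\<alpha> \<noteq> 0"
  proof
    assume "\<alpha> = 0"
    then have "u = 0\<^sub>v n" using ualpha Pc by (intro eq_vecI) auto
    then show False using u(2) nd by simp
  qed
  have Au: "A *\<^sub>v u = th 0 \<cdot>\<^sub>v u"
    using ualpha D_eig[OF D n0] Ac D_colP_carrier[OF D] by (simp add: mult_mat_vec smult_smult_assoc mult.commute)
  define z where "z = Qs *\<^sub>v u"
  have zc: "z \<in> carrier_vec n" unfolding z_def using Qsc uc by simp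
  have Acoord: "Qs *\<^sub>v (A *\<^sub>v y) = T *\<^sub>v (Qs *\<^sub>v y)" if "y \<in> carrier_vec n" for y
    unfolding T_def by (rule D_coord[OF Ds Ac that])
  have Ascoord: "Q *\<^sub>v (As *\<^sub>v y) = Ts *\<^sub>v (Q *\<^sub>v y)" if "y \<in> carrier_vec n" for y
    unfolding Ts_def by (rule D_coord[OF D Asc that])
  have znz: "z $ i \<noteq> 0" if i: "i < n" for i
  proof
    assume zi: "z $ i = 0"
    define kry where "kry k = ((\<lambda>y. As *\<^sub>v y) ^^ k) u" for k
    have kry0: "kry 0 = u" and kryS: "kry (Suc k) = As *\<^sub>v kry k" for k
      unfolding kry_def by auto
    have kryc: "kry k \<in> carrier_vec n" for k
      by (induction k) (use uc Asc in \<open>auto simp: kry0 kryS\<close>)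
    have phi0: "(Qs *\<^sub>v kry k) $ i = 0" for k
    proof (induction k)
      case 0 then show ?case using zi unfolding z_def kry0 .
    next
      case (Suc k) then show ?case unfolding kryS using D_diag[OF Ds kryc i] by simp
    qed
    define Y where "Y k = Q *\<^sub>v kry k" for k
    have Yc: "Y k \<in> carrier_vec n" for k unfolding Y_def using Qc kryc by simp
    have YS: "Y (Suc k) = Ts *\<^sub>v Y k" for k unfolding Y_def kryS by (rule Ascoord[OF kryc])
    have Y0: "Y 0 = \<alpha> \<cdot>\<^sub>v unit_vec n 0"
      unfolding Y_def kry0 ualpha using D_QcolP[OF D n0] Qc D_colP_carrier[OF D] by (simp add: mult_mat_vec)
    have Ytri: "(\<forall>j<n. k < j \<longrightarrow> Y k $ j = 0) \<and> Y k $ k \<noteq> 0" if "k \<le> d" for k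
      using that
    proof (induction k)
      case 0 then show ?case using Y0 anz n0 by auto
    next
      case (Suc k)
      then have IH: "\<forall>j<n. k < j \<longrightarrow> Y k $ j = 0" "Y k $ k \<noteq> 0" by auto
      have m: "k + 1 < n" using Suc.prems n_def by simp
      note hs = hess_step[OF Tsc Tslow Yc IH(1) m]
      have "\<forall>j<n. Suc k < j \<longrightarrow> Y (Suc k) $ j = 0" using hs(1) unfolding YS by simp
      moreover have "Y (Suc k) $ Suc k \<noteq> 0"
        using hs(2) IH(2) Tssub[rule_format, of "Suc k"] Suc.prems unfolding YS by simp
      ultimately show ?case by blast
    qed
    define R where "R = Qs * P"
    have Rc: "R \<in> carrier_mat n n" unfolding R_def using Qsc Pc by simp
    have phi: "(Qs *\<^sub>v x) $ i = (\<Sum>j = 0..<n. R $$ (i, j) * (Q *\<^sub>v x) $ j)" if x: "x \<in> carrier_vec n" for x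
    proof -
      have "Qs *\<^sub>v x = Qs *\<^sub>v (P *\<^sub>v (Q *\<^sub>v x))" using D_PQv[OF D x] by simp
      also have "\<dots> = R *\<^sub>v (Q *\<^sub>v x)" unfolding R_def using Qsc Pc Qc x by simp
      finally show ?thesis using mat_vec_index[OF Rc _ i, of "Q *\<^sub>v x"] Qc x by simp
    qed
    have Rz: "R $$ (i, k) = 0" if "k \<le> d" for k
      using that
    proof (induction k rule: less_induct)
      case (less k)
      have "0 = (\<Sum>j = 0..<n. R $$ (i, j) * Y k $ j)" using phi[OF kryc, of k] phi0[of k] unfolding Y_def by simp
      also have "\<dots> = (\<Sum>j = 0..<n. if j = k then R $$ (i, k) * Y k $ k else 0)"
      proof (rule sum.cong[OF refl])
        fix j assume j: "j \<in> {0..<n}"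
        show "R $$ (i, j) * Y k $ j = (if j = k then R $$ (i, k) * Y k $ k else 0)"
          using less.IH[of j] less.prems Ytri[OF less.prems] j by (cases "j < k") auto
      qed
      also have "\<dots> = R $$ (i, k) * Y k $ k" using less.prems n_def by simp
      finally show ?case using Ytri[OF less.prems] by simp
    qed
    have "(Qs *\<^sub>v col Ps i) $ i = 1" using D_QcolP[OF Ds i] i by simp
    moreover have "(Qs *\<^sub>v col Ps i) $ i = 0"
      unfolding phi[OF D_colP_carrier[OF Ds]] using Rz n_def by (intro sum.neutral) auto
    ultimately show False by simp
  qed
  define v where "v i = Es i *\<^sub>v u" for i
  have Esc: "Es i \<in> carrier_mat n n" if "i < n" for i
    using ths(2) that prim_idem_carrier[OF Asc] by simp
  have vc: "v i \<in> carrier_vec n" if "i < n" for i unfolding v_def using Esc[OF that] uc by simp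
  have Qsv: "Qs *\<^sub>v v i = z $ i \<cdot>\<^sub>v unit_vec n i" if "i < n" for i
    unfolding v_def z_def using D_QE[OF Ds that uc] ths(2) that by simp
  have Brel: "B $$ (m, j) * z $ m = T $$ (m, j) * z $ j" if m: "m < n" and j: "j < n" for m j
  proof -
    have rep: "(A *\<^sub>v v j) $ k = (\<Sum>i<n. B $$ (i, j) * v i $ k)" if "k < n" for k
      using B j that unfolding represents_wrt_def nd v_def by auto
    have Avc: "A *\<^sub>v v j \<in> carrier_vec n" using Ac vc[OF j] by simp
    have "(Qs *\<^sub>v (A *\<^sub>v v j)) $ m = (\<Sum>k = 0..<n. Qs $$ (m, k) * (A *\<^sub>v v j) $ k)"
      by (rule mat_vec_index[OF Qsc Avc m])
    also have "\<dots> = (\<Sum>k = 0..<n. Qs $$ (m, k) * (\<Sum>i<n. B $$ (i, j) * v i $ k))"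
      by (rule sum.cong[OF refl]) (simp add: rep)
    also have "\<dots> = (\<Sum>i<n. B $$ (i, j) * (\<Sum>k = 0..<n. Qs $$ (m, k) * v i $ k))"
      by (simp add: sum_distrib_left sum.swap[of _ "{0..<n}"] ac_simps)
    also have "\<dots> = (\<Sum>i<n. B $$ (i, j) * (Qs *\<^sub>v v i) $ m)"
      by (rule sum.cong[OF refl]) (simp add: mat_vec_index[OF Qsc vc m])
    also have "\<dots> = (\<Sum>i<n. if i = m then B $$ (m, j) * z $ m else 0)"
      by (rule sum.cong[OF refl]) (use m in \<open>auto simp: Qsv\<close>)
    also have "\<dots> = B $$ (m, j) * z $ m" using m by simp
    finally have l: "(Qs *\<^sub>v (A *\<^sub>v v j)) $ m = B $$ (m, j) * z $ m" .
    have "Qs *\<^sub>v (A *\<^sub>v v j) = T *\<^sub>v (z $ j \<cdot>\<^sub>v unit_vec n j)" using Acoord[OF vc[OF j]] Qsv[OF j] by simp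
    also have "\<dots> = z $ j \<cdot>\<^sub>v (T *\<^sub>v unit_vec n j)" using Tc by (simp add: mult_mat_vec)
    finally have "(Qs *\<^sub>v (A *\<^sub>v v j)) $ m = z $ j * T $$ (m, j)"
      using mat_unit_entry[OF Tc m j] m Tc by simp
    then show ?thesis using l by simp
  qed
  define F where "F L = foldr (\<lambda>j P. fac n A th 0 j * P) L (1\<^sub>m n)" for L
  have Fc: "F L \<in> carrier_mat n n" for L unfolding F_def by (rule foldr_fac_carrier[OF Ac])
  have facco: "(Qs *\<^sub>v (fac n A th 0 j *\<^sub>v y)) $ i
      = (1 / (th 0 - th j)) * ((T *\<^sub>v (Qs *\<^sub>v y)) $ i - th j * (Qs *\<^sub>v y) $ i)"
    if y: "y \<in> carrier_vec n" and i: "i < n" for y i j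
  proof -
    have "Qs *\<^sub>v (fac n A th 0 j *\<^sub>v y) = (1 / (th 0 - th j)) \<cdot>\<^sub>v (Qs *\<^sub>v (A *\<^sub>v y) - th j \<cdot>\<^sub>v (Qs *\<^sub>v y))"
      using y Ac Qsc by (simp add: fac_vec mult_mat_vec mult_minus_distrib_mat_vec)
    then show ?thesis using Acoord[OF y] i Qsc Tc y by simp
  qed
  define g where "g j = 1 / (th 0 - th j)" for j
  have Fclaim: "(\<forall>i<n. length L < i \<longrightarrow> (Qs *\<^sub>v (F L *\<^sub>v v 0)) $ i = 0) \<and>
      (Qs *\<^sub>v (F L *\<^sub>v v 0)) $ length L = prod_list (map g L) * (\<Prod>k\<in>{1..length L}. T $$ (k, k - 1)) * z $ 0"
    if "length L \<le> d" for L
    using that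
  proof (induction L)
    case Nil
    show ?case unfolding F_def using Qsv[OF n0] vc[OF n0] n0 by auto
  next
    case (Cons j L)
    let ?X = "Qs *\<^sub>v (F L *\<^sub>v v 0)"
    have Xc: "?X \<in> carrier_vec n" using Qsc Fc[of L] vc[OF n0] by simp
    have IH: "\<forall>i<n. length L < i \<longrightarrow> ?X $ i = 0"
      "?X $ length L = prod_list (map g L) * (\<Prod>k\<in>{1..length L}. T $$ (k, k - 1)) * z $ 0"
      using Cons by auto
    have m: "length L + 1 < n" using Cons.prems n_def by simp
    note hs = hess_step[OF Tc Tlow Xc IH(1) m]
    have Fj: "F (j # L) *\<^sub>v v 0 = fac n A th 0 j *\<^sub>v (F L *\<^sub>v v 0)"
      unfolding F_def by (simp, rule assoc_mult_mat_vec[OF fac_carrier[OF Ac] foldr_fac_carrier[OF Ac] vc[OF n0]])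
    have FLc: "F L *\<^sub>v v 0 \<in> carrier_vec n" using Fc[of L] vc[OF n0] by simp
    have co: "(Qs *\<^sub>v (F (j # L) *\<^sub>v v 0)) $ i = g j * ((T *\<^sub>v ?X) $ i - th j * ?X $ i)" if "i < n" for i
      unfolding Fj g_def by (rule facco[OF FLc that])
    show ?case
    proof
      show "\<forall>i<n. length (j # L) < i \<longrightarrow> (Qs *\<^sub>v (F (j # L) *\<^sub>v v 0)) $ i = 0"
        using co hs(1) IH(1) by auto
      show "(Qs *\<^sub>v (F (j # L) *\<^sub>v v 0)) $ length (j # L) =
          prod_list (map g (j # L)) * (\<Prod>k\<in>{1..length (j # L)}. T $$ (k, k - 1)) * z $ 0"
        using co[of "length L + 1"] m hs(2) IH(1)[rule_format, of "length L + 1"] IH(2)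
        by (simp add: algebra_simps)
    qed
  qed
  define Lf where "Lf = filter (\<lambda>j. j \<noteq> 0) [0..<n]"
  have Lf: "Lf = [1..<Suc d]" unfolding Lf_def nd(2)[symmetric]
    by (simp add: upt_conv_Cons del: upt_Suc)
  have E0F: "E 0 = F Lf" unfolding F_def Lf_def using thE n0 prim_idem_foldr by metis
  have E0c: "E 0 \<in> carrier_mat n n" using E0F Fc by simp
  define G where "G = (\<Prod>j\<in>{1..d}. g j)"
  define TP where "TP m = (\<Prod>k\<in>{1..m}. T $$ (k, k - 1))" for m
  define CP where "CP m = (\<Prod>k\<in>{1..m}. B $$ (k, k - 1))" for m
  have setLf: "set Lf = {1..d}" unfolding Lf by auto
  have prodLf: "prod_list (map g Lf) = G" unfolding G_def setLf[symmetric]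
    by (rule prod.distinct_set_conv_list[symmetric]) (simp add: Lf)
  have lenLf: "length Lf = d" unfolding Lf by simp
  have left: "(Qs *\<^sub>v (E 0 *\<^sub>v v 0)) $ d = G * TP d * z $ 0"
    using Fclaim[of Lf] unfolding lenLf E0F prodLf TP_def by simp
  define \<tau> where "\<tau> = (Q *\<^sub>v (Es 0 *\<^sub>v col P 0)) $ 0"
  have E0v0: "E 0 *\<^sub>v v 0 = \<tau> \<cdot>\<^sub>v u"
  proof -
    have "v 0 = \<alpha> \<cdot>\<^sub>v (Es 0 *\<^sub>v col P 0)" unfolding v_def ualpha
      using Esc[OF n0] D_colP_carrier[OF D] by (simp add: mult_mat_vec)
    then have "(Q *\<^sub>v v 0) $ 0 = \<alpha> * \<tau>" unfolding \<tau>_def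
      using Esc[OF n0] D_colP_carrier[OF D] Qc n0 by (simp add: mult_mat_vec)
    then show ?thesis using D_E[OF D n0 vc[OF n0]] thE n0 ualpha
      by (simp add: smult_smult_assoc mult.commute)
  qed
  have right: "(Qs *\<^sub>v (E 0 *\<^sub>v v 0)) $ d = \<tau> * z $ d"
    unfolding E0v0 z_def using Qsc uc n_def by (simp add: mult_mat_vec)
  have Crel: "CP m * z $ m = TP m * z $ 0" if "m \<le> d" for m
    using that
  proof (induction m)
    case 0 then show ?case unfolding CP_def TP_def by simp
  next
    case (Suc m)
    have b: "B $$ (Suc m, m) * z $ Suc m = T $$ (Suc m, m) * z $ m"
      using Brel[of "Suc m" m] Suc.prems n_def by simp
    have cp: "CP (Suc m) = CP m * B $$ (Suc m, m)" and tp: "TP (Suc m) = TP m * T $$ (Suc m, m)"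
      unfolding CP_def TP_def by simp_all
    have IH: "CP m * z $ m = TP m * z $ 0" using Suc by simp
    have "CP (Suc m) * z $ Suc m = CP m * (B $$ (Suc m, m) * z $ Suc m)" unfolding cp by (simp add: ac_simps)
    also have "\<dots> = T $$ (Suc m, m) * (CP m * z $ m)" unfolding b by (simp add: ac_simps)
    also have "\<dots> = TP (Suc m) * z $ 0" unfolding IH tp by (simp add: ac_simps)
    finally show ?case .
  qed
  have Bnz: "B $$ (k, k - 1) \<noteq> 0" if "k \<in> {1..d}" for k
  proof -
    have "B $$ (k, k - 1) * z $ k = T $$ (k, k - 1) * z $ (k - 1)"
      using Brel[of k "k - 1"] that n_def by auto
    moreover have "T $$ (k, k - 1) * z $ (k - 1) \<noteq> 0"
    proof -
      have "k - 1 < n" using that n_def by auto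
      then show ?thesis using Tsub znz[of "k - 1"] that by auto
    qed
    ultimately show ?thesis by auto
  qed
  have CPnz: "CP d \<noteq> 0" unfolding CP_def using Bnz by simp
  have zd: "z $ d \<noteq> 0" using znz n_def by simp
  have "\<tau> * z $ d = G * CP d * z $ d" using left right Crel[of d] by (simp add: ac_simps)
  then have tauG: "\<tau> = G * CP d" using zd by simp
  define Th where "Th = (\<Prod>i\<in>{1..d}. th 0 - th i)"
  have thne: "th 0 - th i \<noteq> 0" if i: "i \<in> {1..d}" for i
  proof -
    have "i < n" "i \<noteq> 0" using i n_def by auto
    then have "th 0 \<noteq> th i" using inj n0 unfolding inj_on_def by blast
    then show ?thesis by simp
  qed
  have Thnz: "Th \<noteq> 0" unfolding Th_def using thne by simp
  have GTh: "G = inverse Th" unfolding G_def g_def Th_def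
    using prod_inversef[of "\<lambda>i. th 0 - th i" "{1..d}"] by (simp add: o_def divide_inverse)
  have tr: "mat_tr (E 0 * Es 0) = \<tau>"
  proof -
    let ?X = "E 0 * Es 0"
    have Es0c: "Es 0 \<in> carrier_mat n n" by (rule Esc[OF n0])
    have colc: "col (Es 0) r \<in> carrier_vec n" for r using Es0c by (simp add: carrier_vecI)
    have diag: "?X $$ (r, r) = (\<Sum>c = 0..<n. Q $$ (0, c) * Es 0 $$ (c, r)) * P $$ (r, 0)" if r: "r < n" for r
    proof -
      have "?X $$ (r, r) = col ?X r $ r" using r E0c Es0c by simp
      also have "col ?X r = E 0 *\<^sub>v col (Es 0) r" by (rule col_mult2[OF E0c Es0c r])
      also have "\<dots> = (Q *\<^sub>v col (Es 0) r) $ 0 \<cdot>\<^sub>v col P 0"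
        using D_E[OF D n0 colc] thE n0 by simp
      also have "(Q *\<^sub>v col (Es 0) r) $ 0 = (\<Sum>c = 0..<n. Q $$ (0, c) * col (Es 0) r $ c)"
        by (rule mat_vec_index[OF Qc colc n0])
      finally show ?thesis using r Pc Es0c n0 by simp
    qed
    have "mat_tr ?X = (\<Sum>r<n. ?X $$ (r, r))" unfolding mat_tr_def using E0c by simp
    also have "\<dots> = (\<Sum>r<n. (\<Sum>c = 0..<n. Q $$ (0, c) * Es 0 $$ (c, r)) * P $$ (r, 0))"
      by (rule sum.cong[OF refl]) (simp add: diag)
    also have "\<dots> = (\<Sum>c = 0..<n. Q $$ (0, c) * (\<Sum>r = 0..<n. Es 0 $$ (c, r) * P $$ (r, 0)))"
    proof -
      have "(\<Sum>r<n. (\<Sum>c = 0..<n. Q $$ (0, c) * Es 0 $$ (c, r)) * P $$ (r, 0))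
          = (\<Sum>r = 0..<n. \<Sum>c = 0..<n. Q $$ (0, c) * (Es 0 $$ (c, r) * P $$ (r, 0)))"
        unfolding lessThan_atLeast0 sum_distrib_right mult.assoc ..
      also have "\<dots> = (\<Sum>c = 0..<n. \<Sum>r = 0..<n. Q $$ (0, c) * (Es 0 $$ (c, r) * P $$ (r, 0)))"
        by (rule sum.swap)
      also have "\<dots> = (\<Sum>c = 0..<n. Q $$ (0, c) * (\<Sum>r = 0..<n. Es 0 $$ (c, r) * P $$ (r, 0)))"
        unfolding sum_distrib_left ..
      finally show ?thesis .
    qed
    also have "\<dots> = (\<Sum>c = 0..<n. Q $$ (0, c) * (Es 0 *\<^sub>v col P 0) $ c)"
    proof (rule sum.cong[OF refl])
      fix c assume c: "c \<in> {0..<n}"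
      have "(Es 0 *\<^sub>v col P 0) $ c = (\<Sum>r = 0..<n. Es 0 $$ (c, r) * col P 0 $ r)"
        using c by (intro mat_vec_index[OF Es0c D_colP_carrier[OF D]]) auto
      then show "Q $$ (0, c) * (\<Sum>r = 0..<n. Es 0 $$ (c, r) * P $$ (r, 0)) = Q $$ (0, c) * (Es 0 *\<^sub>v col P 0) $ c"
        using Pc n0 by simp
    qed
    also have "\<dots> = \<tau>" unfolding \<tau>_def
      by (rule mat_vec_index[symmetric, OF Qc _ n0]) (use Es0c D_colP_carrier[OF D] in simp)
    finally show ?thesis .
  qed
  show ?thesis unfolding tr tauG GTh Th_def[symmetric] CP_def[symmetric]
    using CPnz Thnz by (simp add: field_simps)
qed

end
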